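(* Let $n\ge1$, $q$ a prime power, $\mathcal{F}$ a covering of $[n]$ with no redundant basic set, and $\phi$ a permutation of $[n]$ that preserves $\mathcal{F}$. Then the map $T_\phi:\mathbb{F}_q^n\to\mathbb{F}_q^n$, $T_\phi(x_1,\dots,x_n)=(x_{\phi(1)},\dots,x_{\phi(n)})$, is a linear isometry of $(\mathbb{F}_q^n,d_{\mathcal{F}})$.
   Context: For a covering $\mathcal{F}$ of $[n]$ (a family of subsets, called basic sets, whose union is $[n]$) and $x\in\mathbb{F}_q^n$, $\mathrm{wt}_{\mathcal{F}}(x)=\min\{|\mathcal{A}|:\mathcal{A}\subset\mathcal{F},\ \mathrm{supp}(x)\subset\bigcup_{A\in\mathcal{A}}A\}$ where $\mathrm{supp}(x)=\{i:x_i\ne0\}$, and $d_{\mathcal{F}}(x,y)=\mathrm{wt}_{\mathcal{F}}(x-y)$. A basic set is redundant if it is properly contained in another basic set. A permutation $\phi$ of $[n]$ preserves $\mathcal{F}$ if $\phi(A)\in\mathcal{F}$ for every $A\in\mathcal{F}$. *)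

theory Defs
  imports Main "HOL-Combinatorics.Permutations"
begin

text \<open>Vectors of F_q^n are modelled as functions nat => 'a that vanish outside [n] = {1..n};
  the field F_q is a type of class {finite, field}.\<close>

definition vecs :: "nat \<Rightarrow> (nat \<Rightarrow> 'a::zero) set" where
  "vecs n = {x. \<forall>i. i \<notin> {1..n} \<longrightarrow> x i = 0}"

definition supp :: "nat \<Rightarrow> (nat \<Rightarrow> 'a::zero) \<Rightarrow> nat set" where
  "supp n x = {i \<in> {1..n}. x i \<noteq> 0}"

definition is_covering :: "nat \<Rightarrow> nat set set \<Rightarrow> bool" where
  "is_covering n F \<longleftrightarrow> (\<forall>A\<in>F. A \<subseteq> {1..n}) \<and> \<Union>F = {1..n}"

definition redundant :: "nat set set \<Rightarrow> nat set \<Rightarrow> bool" where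
  "redundant F A \<longleftrightarrow> A \<in> F \<and> (\<exists>B\<in>F. A \<subset> B)"

definition preserves :: "(nat \<Rightarrow> nat) \<Rightarrow> nat set set \<Rightarrow> bool" where
  "preserves \<phi> F \<longleftrightarrow> (\<forall>A\<in>F. \<phi> ` A \<in> F)"

definition wtF :: "nat \<Rightarrow> nat set set \<Rightarrow> (nat \<Rightarrow> 'a::zero) \<Rightarrow> nat" where
  "wtF n F x = Min {card \<A> | \<A>. \<A> \<subseteq> F \<and> supp n x \<subseteq> \<Union>\<A>}"

definition distF :: "nat \<Rightarrow> nat set set \<Rightarrow> (nat \<Rightarrow> 'a::ab_group_add) \<Rightarrow> (nat \<Rightarrow> 'a) \<Rightarrow> nat" where
  "distF n F x y = wtF n F (\<lambda>i. x i - y i)"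

definition Tperm :: "(nat \<Rightarrow> nat) \<Rightarrow> (nat \<Rightarrow> 'a) \<Rightarrow> (nat \<Rightarrow> 'a)" where
  "Tperm \<phi> x = (\<lambda>i. x (\<phi> i))"

definition linear_on_vecs :: "nat \<Rightarrow> ((nat \<Rightarrow> 'a::field) \<Rightarrow> (nat \<Rightarrow> 'a)) \<Rightarrow> bool" where
  "linear_on_vecs n T \<longleftrightarrow>
     (\<forall>x\<in>vecs n. \<forall>y\<in>vecs n. T (\<lambda>i. x i + y i) = (\<lambda>i. T x i + T y i)) \<and>
     (\<forall>c. \<forall>x\<in>vecs n. T (\<lambda>i. c * x i) = (\<lambda>i. c * T x i))"

end

theory Submission
  imports Defs
begin

lemma inv_preserves:
  assumes cov: "is_covering n F" and p: "\<phi> permutes {1..n}" and pr: "preserves \<phi> F"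
  shows "preserves (inv \<phi>) F"
proof -
  have "F \<subseteq> Pow {1..n}" using cov unfolding is_covering_def by blast
  hence fin: "finite F" by (rule finite_subset) simp
  have injp: "inj \<phi>" using p by (rule permutes_inj)
  have inj: "inj_on (\<lambda>A. \<phi> ` A) F"
    by (rule inj_onI) (use injp in \<open>simp add: inj_image_eq_iff\<close>)
  have sub: "(\<lambda>A. \<phi> ` A) ` F \<subseteq> F" using pr unfolding preserves_def by blast
  have cardeq: "card ((\<lambda>A. \<phi> ` A) ` F) = card F" by (rule card_image[OF inj])
  have eq: "(\<lambda>A. \<phi> ` A) ` F = F"
    by (rule card_subset_eq[OF fin sub cardeq])
  show ?thesis unfolding preserves_def
  proof
    fix A assume "A \<in> F"
    then have "A \<in> (\<lambda>A. \<phi> ` A) ` F" using eq by simp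
    then obtain B where B: "B \<in> F" "A = \<phi> ` B" by blast
    have "inv \<phi> ` A = inv \<phi> ` \<phi> ` B" using B(2) by simp
    also have "\<dots> = B" using injp by (rule image_inv_f_f)
    finally show "inv \<phi> ` A \<in> F" using B(1) by simp
  qed
qed

lemma cardset_sub:
  assumes p: "\<psi> permutes {1..n}" and pr: "preserves \<psi> F"
  shows "{card \<A> | \<A>. \<A> \<subseteq> F \<and> supp n (Tperm \<psi> z) \<subseteq> \<Union>\<A>}
         \<subseteq> {card \<A> | \<A>. \<A> \<subseteq> F \<and> supp n z \<subseteq> \<Union>\<A>}"
proof
  fix k assume "k \<in> {card \<A> | \<A>. \<A> \<subseteq> F \<and> supp n (Tperm \<psi> z) \<subseteq> \<Union>\<A>}"
  then obtain \<A> where A: "k = card \<A>" "\<A> \<subseteq> F" "supp n (Tperm \<psi> z) \<subseteq> \<Union>\<A>" by blast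
  let ?B = "(\<lambda>A. \<psi> ` A) ` \<A>"
  have inj: "inj_on (\<lambda>A. \<psi> ` A) \<A>"
    using permutes_inj[OF p] by (simp add: inj_on_def inj_image_eq_iff)
  have "?B \<subseteq> F" using A(2) pr unfolding preserves_def by auto
  moreover have "supp n z \<subseteq> \<Union>?B"
  proof
    fix i assume i: "i \<in> supp n z"
    then have i1: "i \<in> {1..n}" "z i \<noteq> 0" unfolding supp_def by auto
    let ?j = "inv \<psi> i"
    have j: "\<psi> ?j = i" using permutes_inverses(1)[OF p] by simp
    have "?j \<in> {1..n}" using i1(1) permutes_in_image[OF permutes_inv[OF p]] by simp
    hence "?j \<in> supp n (Tperm \<psi> z)" using i1 j unfolding supp_def Tperm_def by auto
    then obtain A where "A \<in> \<A>" "?j \<in> A" using A(3) by blast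
    hence "\<psi> ` A \<in> ?B" "i \<in> \<psi> ` A" using j by (auto intro!: image_eqI[where x="?j"])
    thus "i \<in> \<Union>?B" by (rule UnionI)
  qed
  moreover have "card ?B = k" using card_image[OF inj] A(1) by simp
  ultimately show "k \<in> {card \<A> | \<A>. \<A> \<subseteq> F \<and> supp n z \<subseteq> \<Union>\<A>}"
    by (intro CollectI exI[where x="?B"]) simp
qed

lemma wt_inv:
  assumes cov: "is_covering n F" and p: "\<phi> permutes {1..n}" and pr: "preserves \<phi> F"
  shows "wtF n F (Tperm \<phi> z) = wtF n F z"
proof -
  have pi: "inv \<phi> permutes {1..n}" using p by (rule permutes_inv)
  have pri: "preserves (inv \<phi>) F" using inv_preserves[OF cov p pr] .
  have bk: "Tperm (inv \<phi>) (Tperm \<phi> z) = z"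
    unfolding Tperm_def using permutes_inverses(1)[OF p] by simp
  have "{card \<A> | \<A>. \<A> \<subseteq> F \<and> supp n (Tperm \<phi> z) \<subseteq> \<Union>\<A>}
         = {card \<A> | \<A>. \<A> \<subseteq> F \<and> supp n z \<subseteq> \<Union>\<A>}"
  proof (rule equalityI)
    show "{card \<A> | \<A>. \<A> \<subseteq> F \<and> supp n (Tperm \<phi> z) \<subseteq> \<Union>\<A>}
         \<subseteq> {card \<A> | \<A>. \<A> \<subseteq> F \<and> supp n z \<subseteq> \<Union>\<A>}"
      by (rule cardset_sub[OF p pr])
    show "{card \<A> | \<A>. \<A> \<subseteq> F \<and> supp n z \<subseteq> \<Union>\<A>}
         \<subseteq> {card \<A> | \<A>. \<A> \<subseteq> F \<and> supp n (Tperm \<phi> z) \<subseteq> \<Union>\<A>}"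
      using cardset_sub[OF pi pri, of "Tperm \<phi> z"] unfolding bk .
  qed
  thus ?thesis unfolding wtF_def by simp
qed

theorem proposition5:
  fixes n :: nat and F :: "nat set set" and \<phi> :: "nat \<Rightarrow> nat"
  assumes "n \<ge> 1"
    and "is_covering n F"
    and "\<forall>A\<in>F. \<not> redundant F A"
    and "\<phi> permutes {1..n}"
    and "preserves \<phi> F"
  shows "bij_betw (Tperm \<phi>) (vecs n) (vecs n :: (nat \<Rightarrow> 'a::{finite,field}) set)
       \<and> linear_on_vecs n (Tperm \<phi> :: (nat \<Rightarrow> 'a) \<Rightarrow> _)
       \<and> (\<forall>x\<in>vecs n. \<forall>y\<in>vecs n.
            distF n F (Tperm \<phi> x) (Tperm \<phi> y) = distF n F x (y :: nat \<Rightarrow> 'a))"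
proof (intro conjI ballI)
  have p: "\<phi> permutes {1..n}" by fact
  have pi: "inv \<phi> permutes {1..n}" using p by (rule permutes_inv)
  have cl: "Tperm \<psi> x \<in> vecs n" if "\<psi> permutes {1..n}" "x \<in> vecs n" for \<psi> and x :: "nat \<Rightarrow> 'a"
    using that unfolding vecs_def Tperm_def by (simp add: permutes_not_in)
  show "bij_betw (Tperm \<phi>) (vecs n) (vecs n :: (nat \<Rightarrow> 'a::{finite,field}) set)"
  proof (rule bij_betw_byWitness[where f'="Tperm (inv \<phi>)"])
    show "\<forall>a\<in>vecs n. Tperm (inv \<phi>) (Tperm \<phi> a) = (a :: nat \<Rightarrow> 'a)"
      unfolding Tperm_def using permutes_inverses(1)[OF p] by simp
    show "\<forall>a\<in>vecs n. Tperm \<phi> (Tperm (inv \<phi>) a) = (a :: nat \<Rightarrow> 'a)"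
      unfolding Tperm_def using permutes_inverses(2)[OF p] by simp
    show "Tperm \<phi> ` vecs n \<subseteq> (vecs n :: (nat \<Rightarrow> 'a) set)" using cl[OF p] by auto
    show "Tperm (inv \<phi>) ` vecs n \<subseteq> (vecs n :: (nat \<Rightarrow> 'a) set)" using cl[OF pi] by auto
  qed
  show "linear_on_vecs n (Tperm \<phi> :: (nat \<Rightarrow> 'a) \<Rightarrow> _)"
    unfolding linear_on_vecs_def Tperm_def by simp
  fix x y :: "nat \<Rightarrow> 'a"
  have "(\<lambda>i. Tperm \<phi> x i - Tperm \<phi> y i) = Tperm \<phi> (\<lambda>i. x i - y i)"
    unfolding Tperm_def by simp
  thus "distF n F (Tperm \<phi> x) (Tperm \<phi> y) = distF n F x y"
    unfolding distF_def using wt_inv[OF assms(2) p assms(5)] by simp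
qed

end
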